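(* Let $K$ be a field of characteristic zero, $L_n=K[x_1^{\pm1},\ldots,x_n^{\pm1}]$ and $W_n=\mathrm{Der}_K(L_n)$. The subgroup of $\mathrm{Aut}_{\mathrm{Lie}}(W_n)$ consisting of automorphisms fixing each $H_i=x_i\partial_i$ ($i=1,\ldots,n$) equals $\mathbb{T}^n$.
   Context: $\mathbb{T}^n=\{t_\lambda\mid\lambda\in K^{*n}\}$ with $t_\lambda\in\mathrm{Aut}_{K\text{-alg}}(L_n)$, $t_\lambda(x_i)=\lambda_ix_i$, regarded as automorphisms of $W_n$ via $\delta\mapsto t_\lambda\delta t_\lambda^{-1}$. *)

theory Defs
  imports "HOL-Library.Poly_Mapping" "HOL-Library.FuncSet"
begin

text \<open>Laurent polynomials L_n = K[x_i^{+-1}] in variables indexed by a finite type 'n: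
  finitely supported maps from exponent vectors ('n =>0 int) to K, with convolution product.\<close>
type_synonym ('n, 'k) laurent = "('n \<Rightarrow>\<^sub>0 int) \<Rightarrow>\<^sub>0 'k"

definition lcst :: "'k::comm_ring_1 \<Rightarrow> ('n, 'k) laurent" where
  "lcst c = Poly_Mapping.single 0 c"

definition lsmult :: "'k::comm_ring_1 \<Rightarrow> ('n, 'k) laurent \<Rightarrow> ('n, 'k) laurent" where
  "lsmult c f = lcst c * f"

definition xvar :: "'n \<Rightarrow> ('n, 'k::comm_ring_1) laurent" where
  "xvar i = Poly_Mapping.single (Poly_Mapping.single i 1) 1"

definition is_der :: "(('n, 'k::comm_ring_1) laurent \<Rightarrow> ('n, 'k) laurent) \<Rightarrow> bool" where
  "is_der D \<longleftrightarrow> (\<forall>f g. D (f + g) = D f + D g) \<and> (\<forall>c f. D (lsmult c f) = lsmult c (D f))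
     \<and> (\<forall>f g. D (f * g) = D f * g + f * D g)"

definition Wn :: "(('n, 'k::comm_ring_1) laurent \<Rightarrow> ('n, 'k) laurent) set" where
  "Wn = {D. is_der D}"

definition pderiv_i :: "'n \<Rightarrow> ('n, 'k::comm_ring_1) laurent \<Rightarrow> ('n, 'k) laurent" where
  "pderiv_i i f = (\<Sum>(e::'n \<Rightarrow>\<^sub>0 int)\<in>Poly_Mapping.keys f. Poly_Mapping.single (e - Poly_Mapping.single i 1)
                                   (of_int (Poly_Mapping.lookup e i) * Poly_Mapping.lookup f e))"

definition Hdiag :: "'n \<Rightarrow> ('n, 'k::comm_ring_1) laurent \<Rightarrow> ('n, 'k) laurent" where
  "Hdiag i f = xvar i * pderiv_i i f"

definition lie_br :: "(('n, 'k::comm_ring_1) laurent \<Rightarrow> ('n, 'k) laurent) \<Rightarrow>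
    (('n, 'k) laurent \<Rightarrow> ('n, 'k) laurent) \<Rightarrow> ('n, 'k) laurent \<Rightarrow> ('n, 'k) laurent" where
  "lie_br D E = (\<lambda>f. D (E f) - E (D f))"

definition dadd :: "(('n, 'k::comm_ring_1) laurent \<Rightarrow> ('n, 'k) laurent) \<Rightarrow>
    (('n, 'k) laurent \<Rightarrow> ('n, 'k) laurent) \<Rightarrow> ('n, 'k) laurent \<Rightarrow> ('n, 'k) laurent" where
  "dadd D E = (\<lambda>f. D f + E f)"

definition dsmult :: "'k::comm_ring_1 \<Rightarrow> (('n, 'k) laurent \<Rightarrow> ('n, 'k) laurent) \<Rightarrow>
    ('n, 'k) laurent \<Rightarrow> ('n, 'k) laurent" where
  "dsmult c D = (\<lambda>f. lsmult c (D f))"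

definition lie_aut :: "((('n, 'k::field) laurent \<Rightarrow> ('n, 'k) laurent) \<Rightarrow>
    (('n, 'k) laurent \<Rightarrow> ('n, 'k) laurent)) set" where
  "lie_aut = {\<phi>. \<phi> \<in> extensional Wn \<and> bij_betw \<phi> Wn Wn
      \<and> (\<forall>D\<in>Wn. \<forall>E\<in>Wn. \<phi> (dadd D E) = dadd (\<phi> D) (\<phi> E))
      \<and> (\<forall>c. \<forall>D\<in>Wn. \<phi> (dsmult c D) = dsmult c (\<phi> D))
      \<and> (\<forall>D\<in>Wn. \<forall>E\<in>Wn. \<phi> (lie_br D E) = lie_br (\<phi> D) (\<phi> E))}"

text \<open>Torus element t_lambda: the K-algebra automorphism with x_i |-> lambda_i x_i,
  i.e. x^e |-> (prod_i lambda_i^(e_i)) x^e.\<close>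
definition tor :: "('n \<Rightarrow> 'k::field) \<Rightarrow> ('n, 'k) laurent \<Rightarrow> ('n, 'k) laurent" where
  "tor l f = (\<Sum>(e::'n \<Rightarrow>\<^sub>0 int)\<in>Poly_Mapping.keys f. Poly_Mapping.single e
               ((\<Prod>i\<in>Poly_Mapping.keys e. l i powi Poly_Mapping.lookup e i) * Poly_Mapping.lookup f e))"

definition torus_W :: "((('n, 'k::field) laurent \<Rightarrow> ('n, 'k) laurent) \<Rightarrow>
    (('n, 'k) laurent \<Rightarrow> ('n, 'k) laurent)) set" where
  "torus_W = {restrict (\<lambda>\<delta>. tor l \<circ> \<delta> \<circ> inv (tor l)) Wn | l. \<forall>i. l i \<noteq> 0}"

end

theory Submission
  imports Defs
begin


definition dot :: "('n::finite \<Rightarrow> 'k::comm_ring_1) \<Rightarrow> ('n \<Rightarrow>\<^sub>0 int) \<Rightarrow> 'k" where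
  "dot a g = (\<Sum>j\<in>UNIV. a j * of_int (Poly_Mapping.lookup g j))"

lemma dot_add1: "dot (\<lambda>k. a k + b k) g = dot a g + dot b g"
  by (simp add: dot_def distrib_right sum.distrib)
lemma dot_diff1: "dot (\<lambda>k. a k - b k) g = dot a g - dot b g"
  by (simp add: dot_def left_diff_distrib sum_subtractf)
lemma dot_smul1: "dot (\<lambda>k. t * a k) g = t * dot a g"
  by (simp add: dot_def sum_distrib_left mult.assoc)
lemma dot_zero1 [simp]: "dot (\<lambda>k. 0) g = 0"
  by (simp add: dot_def)
lemma dot_add2: "dot a (g + h) = dot a g + dot a h"
  by (simp add: dot_def lookup_add distrib_left sum.distrib)
lemma dot_uminus2: "dot a (- g) = - dot a g"
  by (simp add: dot_def sum_negf)
lemma dot_zero2 [simp]: "dot a 0 = 0"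
  by (simp add: dot_def)
lemma dot_single2: "dot a (Poly_Mapping.single k 1) = a k"
proof -
  have "dot a (Poly_Mapping.single k 1) = (\<Sum>j\<in>UNIV. if j = k then a k else 0)"
    unfolding dot_def by (rule sum.cong) (auto simp: lookup_single)
  then show ?thesis by simp
qed
lemma dot_uv1: "dot (\<lambda>j. if j = k then 1 else 0) g = of_int (Poly_Mapping.lookup g k)"
proof -
  have "dot (\<lambda>j. if j = k then 1 else 0) g = (\<Sum>j\<in>UNIV. if j = k then of_int (Poly_Mapping.lookup g k) else 0)"
    unfolding dot_def by (rule sum.cong) auto
  then show ?thesis by simp
qed

lemma alg1: "(c::'k::field) \<noteq> 0 \<Longrightarrow> g \<noteq> 0 \<Longrightarrow> (z - c * y) / (c * g) = (1 / (c * g)) * z - (1/g) * y"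
  by (simp add: field_simps)
lemma alg2: "(c::'k::field) \<noteq> 0 \<Longrightarrow> g \<noteq> 0 \<Longrightarrow> c * (x - (s / g) * y) + (s / g) * z = c * (x + s * ((z - c * y) / (c * g)))"
  by (simp add: field_simps)

lemma alg3: assumes "x * (x * (x * y)) = y * (x * y)" "x \<noteq> 0" "y \<noteq> 0" shows "x * x = (y::'k::field)"
proof -
  have "(x * y) * (x * x) = x * (x * (x * y))" by (simp only: ac_simps)
  also have "\<dots> = y * (x * y)" by (rule assms(1))
  also have "\<dots> = (x * y) * y" by (simp only: ac_simps)
  finally show ?thesis using assms(2,3) by simp
qed

locale core =
  fixes A :: "('n::finite \<Rightarrow>\<^sub>0 int) \<Rightarrow> ('n \<Rightarrow> 'k::field_char_0) \<Rightarrow> ('n \<Rightarrow> 'k)"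
  assumes add: "\<And>g a b. A g (\<lambda>k. a k + b k) = (\<lambda>k. A g a k + A g b k)"
  and smul: "\<And>g t a. A g (\<lambda>k. t * a k) = (\<lambda>k. t * A g a k)"
  and inj: "\<And>g a b. A g a = A g b \<Longrightarrow> a = b"
  and surj: "\<And>g b. \<exists>a. A g a = b"
  and A0: "\<And>a. A 0 a = a"
  and br: "\<And>g h a b. A (g + h) (\<lambda>k. dot a h * b k - dot b g * a k)
            = (\<lambda>k. dot (A g a) h * A h b k - dot (A h b) g * A g a k)"
begin

lemma zero: "A g (\<lambda>k. 0) = (\<lambda>k. 0)"
  using smul[of g 0 "\<lambda>k. 0"] by simp

lemma diff: "A g (\<lambda>k. a k - b k) = (\<lambda>k. A g a k - A g b k)"
proof -
  have "A g (\<lambda>k. a k - b k) = A g (\<lambda>k. a k + (-1) * b k)" by simp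
  also have "\<dots> = (\<lambda>k. A g a k + (-1) * A g b k)" by (simp only: add smul)
  finally show ?thesis by simp
qed

lemma E1: "(\<lambda>k. dot a g * b k + dot b g * a k)
   = (\<lambda>k. dot (A g a) g * A (-g) b k + dot (A (-g) b) g * A g a k)"
proof -
  have "A (g + - g) (\<lambda>k. dot a (-g) * b k - dot b g * a k)
     = (\<lambda>k. dot (A g a) (-g) * A (-g) b k - dot (A (-g) b) g * A g a k)" by (rule br)
  then have "(\<lambda>k. - dot a g * b k - dot b g * a k)
     = (\<lambda>k. - dot (A g a) g * A (-g) b k - dot (A (-g) b) g * A g a k)"
    by (simp add: A0 dot_uminus2)
  then show ?thesis by (auto simp: fun_eq_iff algebra_simps dest: fun_cong)
qed

lemma E1k: "dot a g * b k + dot b g * a k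
   = dot (A g a) g * A (-g) b k + dot (A (-g) b) g * A g a k"
  using fun_cong[OF E1[where a=a and g=g and b=b], of k] by simp

lemma S1: assumes "dot a g = 0" shows "dot (A g a) g = 0"
proof (rule ccontr)
  let ?w = "A g a"
  assume ne: "dot ?w g \<noteq> 0"
  obtain b where b: "A (-g) b = ?w" using surj by blast
  have "\<forall>k. ?w k = (dot b g / (2 * dot ?w g)) * a k"
  proof
    fix k
    have "dot a g * b k + dot b g * a k = dot ?w g * ?w k + dot ?w g * ?w k"
      using E1k[where a=a and g=g and b=b and k=k] b by simp
    then have "dot b g * a k = 2 * dot ?w g * ?w k" using assms by simp
    then show "?w k = (dot b g / (2 * dot ?w g)) * a k" using ne by (simp add: field_simps)
  qed
  then have "?w = (\<lambda>k. (dot b g / (2 * dot ?w g)) * a k)" by auto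
  then have "dot ?w g = (dot b g / (2 * dot ?w g)) * dot a g"
    by (metis dot_smul1)
  then show False using ne assms by simp
qed

lemma S1': assumes "dot b g = 0" shows "dot (A (-g) b) g = 0"
proof -
  have "dot b (-g) = 0" using assms by (simp add: dot_uminus2)
  then have "dot (A (-g) b) (-g) = 0" by (rule S1)
  then show ?thesis by (simp add: dot_uminus2)
qed

lemma S2: assumes "dot a g = 0" shows "dot b g * a k = dot (A (-g) b) g * A g a k"
  using E1k[where a=a and g=g and b=b and k=k] assms S1[OF assms] by simp

lemma S2': assumes "dot b g = 0" shows "dot a g * b k = dot (A g a) g * A (-g) b k"
  using E1k[where a=a and g=g and b=b and k=k] assms S1'[OF assms] by simp


lemma A_scaled: "A g (\<lambda>k. t * a k) k = t * A g a k"
  using smul by simp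

lemma A_lin2: "A g (\<lambda>k. a k + t * e k) k = A g a k + t * A g e k"
  using add[of g a "\<lambda>k. t * e k"] smul[of g t e] by simp

lemma S3: "\<exists>c u. c \<noteq> 0 \<and> dot u g = 0 \<and> (\<forall>a. A g a = (\<lambda>k. c * (a k + dot a g * u k)))"
proof (cases "g = 0")
  case True
  then show ?thesis by (intro exI[of _ 1] exI[of _ "\<lambda>k. 0"]) (simp add: A0)
next
  case False
  then obtain i where gi: "Poly_Mapping.lookup g i \<noteq> 0"
    by (metis poly_mapping_eqI lookup_zero)
  define e :: "'n \<Rightarrow> 'k" where "e = (\<lambda>j. if j = i then 1 else 0)"
  define \<gamma> where "\<gamma> = dot e g"
  have \<gamma>: "\<gamma> = of_int (Poly_Mapping.lookup g i)" unfolding \<gamma>_def e_def by (rule dot_uv1)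
  have \<gamma>0: "\<gamma> \<noteq> 0" using gi \<gamma> by simp
  have dec: "dot (\<lambda>k. a k - (dot a g / \<gamma>) * e k) g = 0" for a
  proof -
    have "dot (\<lambda>k. a k - (dot a g / \<gamma>) * e k) g = dot a g - (dot a g / \<gamma>) * \<gamma>"
      by (simp only: dot_diff1 dot_smul1 \<gamma>_def)
    then show ?thesis using \<gamma>0 by simp
  qed
  have rec: "a = (\<lambda>k. (a k - (dot a g / \<gamma>) * e k) + (dot a g / \<gamma>) * e k)" for a
    by simp
  have Arec: "A g a k = A g (\<lambda>k. a k - (dot a g / \<gamma>) * e k) k + (dot a g / \<gamma>) * A g e k" for a k
    by (subst rec) (rule A_lin2)
  show ?thesis
  proof (cases "\<exists>a0::'n\<Rightarrow>'k. dot a0 g = 0 \<and> a0 \<noteq> (\<lambda>k. 0)")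
    case True
    then obtain a0 :: "'n \<Rightarrow> 'k" where a0: "dot a0 g = 0" "a0 \<noteq> (\<lambda>k. 0)" by blast
    then obtain k0 where k0: "a0 k0 \<noteq> 0" by auto
    define sQ where "sQ = dot (A (-g) e) g"
    define sP where "sP = dot (A g e) g"
    have "\<gamma> * a0 k0 = sQ * A g a0 k0" using S2[OF a0(1), of e k0] by (simp add: sQ_def \<gamma>_def)
    then have sQ0: "sQ \<noteq> 0" using \<gamma>0 k0 by auto
    define c where "c = \<gamma> / sQ"
    have c0: "c \<noteq> 0" using sQ0 \<gamma>0 by (simp add: c_def)
    have Pperp: "A g a k = c * a k" if "dot a g = 0" for a k
    proof -
      have "\<gamma> * a k = sQ * A g a k" using S2[OF that, of e k] by (simp add: sQ_def \<gamma>_def)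
      then show ?thesis using sQ0 by (simp add: c_def field_simps)
    qed
    have "(\<lambda>k. \<gamma> * e k + \<gamma> * e k) = (\<lambda>k. sP * A (-g) e k + sQ * A g e k)"
      using E1[where a=e and g=g and b=e] by (simp add: sP_def sQ_def \<gamma>_def)
    then have "dot (\<lambda>k. \<gamma> * e k + \<gamma> * e k) g = dot (\<lambda>k. sP * A (-g) e k + sQ * A g e k) g"
      by simp
    then have "\<gamma> * \<gamma> + \<gamma> * \<gamma> = sP * sQ + sQ * sP"
      by (simp add: dot_add1 dot_smul1 sP_def[symmetric] sQ_def[symmetric] \<gamma>_def[symmetric])
    then have sPv: "sP = c * \<gamma>" using sQ0 by (simp add: c_def field_simps)
    define u where "u = (\<lambda>k. (A g e k - c * e k) / (c * \<gamma>))"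
    have du: "dot u g = 0"
    proof -
      have "u = (\<lambda>k. (1 / (c * \<gamma>)) * A g e k - (1/\<gamma>) * e k)"
        using c0 \<gamma>0 by (auto simp: u_def fun_eq_iff alg1)
      then have "dot u g = dot (\<lambda>k. (1 / (c * \<gamma>)) * A g e k - (1/\<gamma>) * e k) g"
        by simp
      also have "\<dots> = (1 / (c * \<gamma>)) * sP - (1/\<gamma>) * \<gamma>"
        by (simp only: dot_diff1 dot_smul1 sP_def \<gamma>_def)
      finally have "dot u g = (1 / (c * \<gamma>)) * sP - (1/\<gamma>) * \<gamma>" .
      then show ?thesis using sPv c0 \<gamma>0 by simp
    qed
    have "A g a = (\<lambda>k. c * (a k + dot a g * u k))" for a
    proof
      fix k
      have "A g a k = c * (a k - (dot a g / \<gamma>) * e k) + (dot a g / \<gamma>) * A g e k"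
        using Arec[of a k] Pperp[OF dec[of a], of k] by (simp only:)
      then show "A g a k = c * (a k + dot a g * u k)"
        using c0 \<gamma>0 alg2 by (simp add: u_def)
    qed
    then show ?thesis using c0 du by blast
  next
    case False
    then have allpar: "a = (\<lambda>k. (dot a g / \<gamma>) * e k)" for a
      using dec[of a] by (auto simp: fun_eq_iff)
    define c where "c = dot (A g e) g / \<gamma>"
    have Pe: "A g e = (\<lambda>k. c * e k)"
    proof -
      have "A g e = (\<lambda>k. (dot (A g e) g / \<gamma>) * e k)" by (rule allpar)
      then show ?thesis by (simp only: c_def)
    qed
    have Pa: "A g a = (\<lambda>k. c * a k)" for a
    proof -
      have "A g a = A g (\<lambda>k. (dot a g / \<gamma>) * e k)" using allpar[of a] by (rule arg_cong)
      also have "\<dots> = (\<lambda>k. (dot a g / \<gamma>) * (c * e k))" by (simp only: smul Pe)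
      also have "\<dots> = (\<lambda>k. c * ((dot a g / \<gamma>) * e k))" by (simp add: ac_simps)
      also have "\<dots> = (\<lambda>k. c * a k)" using allpar[of a] by metis
      finally show ?thesis .
    qed
    have c0: "c \<noteq> 0"
    proof
      assume "c = 0"
      then have "A g e = A g (\<lambda>k. 0)" using Pe zero by simp
      then have "e = (\<lambda>k. 0)" by (rule inj)
      then show False unfolding e_def by (metis zero_neq_one)
    qed
    show ?thesis using Pa c0 by (intro exI[of _ c] exI[of _ "\<lambda>k. 0"]) simp
  qed
qed


lemma dot_shear: "dot (\<lambda>k. c * (a k + t * u k)) g = c * (dot a g + t * dot u g)"
proof -
  have "dot (\<lambda>k. c * (a k + t * u k)) g = c * dot (\<lambda>k. a k + t * u k) g" by (rule dot_smul1)
  also have "dot (\<lambda>k. a k + t * u k) g = dot a g + t * dot u g" by (simp only: dot_add1 dot_smul1)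
  finally show ?thesis .
qed

lemma indep:
  fixes p q :: "'n \<Rightarrow> 'k" and C :: "('n \<Rightarrow>\<^sub>0 int) \<Rightarrow> 'k"
  assumes sh: "\<And>g a. A g a = (\<lambda>k. C g * (a k + dot a g * U g k))"
    and C0: "\<And>g. C g \<noteq> 0" and U0: "\<And>g. dot (U g) g = 0"
    and p: "dot p \<alpha> = 0" "dot p \<beta> = 1" and q: "dot q \<beta> = 0" "dot q \<alpha> = 1"
  shows "dot (U \<alpha>) \<beta> = 0"
proof -
  define X where "X = dot (U \<alpha>) \<beta>"
  define Y where "Y = dot (U \<beta>) \<alpha>"
  have dpab: "dot p (\<alpha> + \<beta>) = 1" "dot q (\<alpha> + \<beta>) = 1" using p q by (simp_all add: dot_add2)
  have Ap: "A \<alpha> p = (\<lambda>k. C \<alpha> * p k)" using sh[of \<alpha> p] p by simp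
  have Aq: "A \<beta> q = (\<lambda>k. C \<beta> * q k)" using sh[of \<beta> q] q by simp
  have dAp: "dot (A \<alpha> p) \<beta> = C \<alpha>" using Ap p by (simp add: dot_smul1)
  have dAq: "dot (A \<beta> q) \<alpha> = C \<beta>" using Aq q by (simp add: dot_smul1)
  have dAbp: "dot (A \<beta> p) \<alpha> = C \<beta> * Y" by (simp only: sh[of \<beta> p] dot_shear) (simp add: p Y_def)
  have dAaq: "dot (A \<alpha> q) \<beta> = C \<alpha> * X" by (simp only: sh[of \<alpha> q] dot_shear) (simp add: q X_def)
  have dAbp2: "dot (A \<beta> p) \<beta> = C \<beta>" by (simp only: sh[of \<beta> p] dot_shear) (simp add: p U0)
  have dAaq2: "dot (A \<alpha> q) \<alpha> = C \<alpha>" by (simp only: sh[of \<alpha> q] dot_shear) (simp add: q U0)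
  have pq: "A (\<alpha> + \<beta>) (\<lambda>k. q k - p k) = (\<lambda>k. C \<alpha> * C \<beta> * q k - C \<beta> * C \<alpha> * p k)"
    using br[of \<alpha> \<beta> p q] p q dAp dAq Ap Aq by (simp add: mult.assoc)
  have "dot (A (\<alpha> + \<beta>) (\<lambda>k. q k - p k)) \<alpha> = C (\<alpha> + \<beta>)"
    by (simp only: sh[of "\<alpha>+\<beta>" "\<lambda>k. q k - p k"] dot_shear dot_diff1) (simp add: p q dpab U0)
  moreover have "dot (\<lambda>k. C \<alpha> * C \<beta> * q k - C \<beta> * C \<alpha> * p k) \<alpha> = C \<alpha> * C \<beta>"
    using p q by (simp add: dot_diff1 dot_smul1)
  ultimately have Cm: "C (\<alpha> + \<beta>) = C \<alpha> * C \<beta>" using pq by simp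
  have Cab0: "C \<alpha> * C \<beta> \<noteq> 0" using C0 by simp
  have pp: "U (\<alpha>+\<beta>) k = U \<beta> k - Y * p k" for k
  proof -
    have e: "(\<lambda>k. dot p \<beta> * p k - dot p \<alpha> * p k) = p" using p by simp
    have "A (\<alpha> + \<beta>) (\<lambda>k. dot p \<beta> * p k - dot p \<alpha> * p k) k
       = dot (A \<alpha> p) \<beta> * A \<beta> p k - dot (A \<beta> p) \<alpha> * A \<alpha> p k" using br by metis
    then have "A (\<alpha> + \<beta>) p k = C \<alpha> * A \<beta> p k - C \<beta> * Y * (C \<alpha> * p k)"
      by (simp only: e) (simp only: dAp dAbp Ap dot_smul1 p mult_1_right)
    then have "C (\<alpha>+\<beta>) * (p k + 1 * U (\<alpha>+\<beta>) k) = C \<alpha> * (C \<beta> * (p k + 1 * U \<beta> k)) - C \<beta> * Y * (C \<alpha> * p k)"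
      by (simp only: sh dpab p)
    then have "(C \<alpha> * C \<beta>) * U (\<alpha>+\<beta>) k = (C \<alpha> * C \<beta>) * (U \<beta> k - Y * p k)"
      by (simp add: Cm algebra_simps)
    then show ?thesis using Cab0 by simp
  qed
  have qq: "U (\<alpha>+\<beta>) k = U \<alpha> k - X * q k" for k
  proof -
    have e: "(\<lambda>k. dot q \<beta> * q k - dot q \<alpha> * q k) = (\<lambda>k. (-1) * q k)" using q by simp
    have "A (\<alpha> + \<beta>) (\<lambda>k. dot q \<beta> * q k - dot q \<alpha> * q k) k
       = dot (A \<alpha> q) \<beta> * A \<beta> q k - dot (A \<beta> q) \<alpha> * A \<alpha> q k" using br by metis
    then have "A (\<alpha> + \<beta>) (\<lambda>k. (-1) * q k) k = C \<alpha> * X * (C \<beta> * q k) - C \<beta> * A \<alpha> q k"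
      by (simp only: e) (simp only: dAaq dAq Aq dot_smul1 q mult_1_right)
    then have "(-1) * A (\<alpha> + \<beta>) q k = C \<alpha> * X * (C \<beta> * q k) - C \<beta> * A \<alpha> q k"
      by (simp only: A_scaled)
    then have "(-1) * (C (\<alpha>+\<beta>) * (q k + 1 * U (\<alpha>+\<beta>) k)) = C \<alpha> * X * (C \<beta> * q k) - C \<beta> * (C \<alpha> * (q k + 1 * U \<alpha> k))"
      by (simp only: sh dpab q)
    then have "(C \<alpha> * C \<beta>) * U (\<alpha>+\<beta>) k = (C \<alpha> * C \<beta>) * (U \<alpha> k - X * q k)"
      by (simp add: Cm algebra_simps)
    then show ?thesis using Cab0 by simp
  qed
  have qp: "X * (p k + U \<beta> k) = Y * (q k + U \<alpha> k)" for k
  proof -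
    have e: "(\<lambda>k. dot q \<beta> * p k - dot p \<alpha> * q k) = (\<lambda>k. 0)" using p q by simp
    have "A (\<alpha> + \<beta>) (\<lambda>k. dot q \<beta> * p k - dot p \<alpha> * q k) k
       = dot (A \<alpha> q) \<beta> * A \<beta> p k - dot (A \<beta> p) \<alpha> * A \<alpha> q k" using br by metis
    then have "0 = C \<alpha> * X * A \<beta> p k - C \<beta> * Y * A \<alpha> q k"
      by (simp only: e) (simp only: zero dAaq dAbp)
    then have "0 = C \<alpha> * X * (C \<beta> * (p k + 1 * U \<beta> k)) - C \<beta> * Y * (C \<alpha> * (q k + 1 * U \<alpha> k))"
      by (simp only: sh p q)
    then have "(C \<alpha> * C \<beta>) * (X * (p k + U \<beta> k)) = (C \<alpha> * C \<beta>) * (Y * (q k + U \<alpha> k))"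
      by (simp add: algebra_simps)
    then show ?thesis using Cab0 by simp
  qed
  have "(\<lambda>k. U \<beta> k - Y * p k) = (\<lambda>k. U \<alpha> k - X * q k)" using pp qq by auto
  then have "dot (\<lambda>k. U \<beta> k - Y * p k) \<alpha> = dot (\<lambda>k. U \<alpha> k - X * q k) \<alpha>" by simp
  then have "Y - Y * 0 = 0 - X * 1" by (simp only: dot_diff1 dot_smul1 p q U0 Y_def)
  then have YX: "Y = - X" by simp
  have f: "(\<lambda>k. X * p k + X * U \<beta> k) = (\<lambda>k. Y * q k + Y * U \<alpha> k)" using qp by (simp add: algebra_simps)
  then have "dot (\<lambda>k. X * p k + X * U \<beta> k) \<alpha> = dot (\<lambda>k. Y * q k + Y * U \<alpha> k) \<alpha>" by simp
  then have "X * 0 + X * Y = Y * 1 + Y * 0" by (simp only: dot_add1 dot_smul1 p q U0 Y_def)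
  then have h1: "X * Y = Y" by simp
  from f have "dot (\<lambda>k. X * p k + X * U \<beta> k) \<beta> = dot (\<lambda>k. Y * q k + Y * U \<alpha> k) \<beta>" by simp
  then have "X * 1 + X * 0 = Y * 0 + Y * X" by (simp only: dot_add1 dot_smul1 p q U0 X_def)
  then have h2: "X = Y * X" by simp
  from h1 h2 have "X = Y" by (metis mult.commute)
  with YX have "X = 0" by simp
  then show ?thesis by (simp add: X_def)
qed


lemma U_zero:
  fixes C :: "('n \<Rightarrow>\<^sub>0 int) \<Rightarrow> 'k"
  assumes sh: "\<And>g a. A g a = (\<lambda>k. C g * (a k + dot a g * U g k))"
    and C0: "\<And>g. C g \<noteq> 0" and U0: "\<And>g. dot (U g) g = 0"
    and g0: "g \<noteq> 0"
  shows "U g k = 0"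
proof (cases "\<exists>i. i \<noteq> k \<and> Poly_Mapping.lookup g i \<noteq> 0")
  case True
  then obtain i where i: "i \<noteq> k" "Poly_Mapping.lookup g i \<noteq> 0" by blast
  define gi :: 'k where "gi = of_int (Poly_Mapping.lookup g i)"
  define gk :: 'k where "gk = of_int (Poly_Mapping.lookup g k)"
  have gi0: "gi \<noteq> 0" using i by (simp add: gi_def)
  define ei :: "'n \<Rightarrow> 'k" where "ei = (\<lambda>j. if j = i then 1 else 0)"
  define ek :: "'n \<Rightarrow> 'k" where "ek = (\<lambda>j. if j = k then 1 else 0)"
  define \<beta> :: "'n \<Rightarrow>\<^sub>0 int" where "\<beta> = Poly_Mapping.single k 1"
  have d: "dot ei g = gi" "dot ek g = gk" "dot ei \<beta> = 0" "dot ek \<beta> = 1"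
    using i by (simp_all add: ei_def ek_def gi_def gk_def \<beta>_def dot_uv1 lookup_single)
  define p where "p = (\<lambda>j. (-1/gi) * (gk * ei j - gi * ek j))"
  define q where "q = (\<lambda>j. (1/gi) * ei j)"
  have "dot p g = (-1/gi) * (gk * gi - gi * gk)" unfolding p_def by (simp only: dot_smul1 dot_diff1 d)
  then have p1: "dot p g = 0" by simp
  have "dot p \<beta> = (-1/gi) * (gk * 0 - gi * 1)" unfolding p_def by (simp only: dot_smul1 dot_diff1 d)
  then have p2: "dot p \<beta> = 1" using gi0 by simp
  have "dot q \<beta> = (1/gi) * 0" unfolding q_def by (simp only: dot_smul1 d)
  then have q1: "dot q \<beta> = 0" by simp
  have "dot q g = (1/gi) * gi" unfolding q_def by (simp only: dot_smul1 d)
  then have q2: "dot q g = 1" using gi0 by simp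
  have "dot (U g) \<beta> = 0" by (rule indep[OF sh C0 U0 p1 p2 q1 q2])
  then show ?thesis by (simp add: \<beta>_def dot_single2)
next
  case False
  then have z: "\<And>j. j \<noteq> k \<Longrightarrow> Poly_Mapping.lookup g j = 0" by blast
  have gk: "Poly_Mapping.lookup g k \<noteq> 0"
  proof
    assume "Poly_Mapping.lookup g k = 0"
    then have "g = 0" using z by (metis poly_mapping_eqI lookup_zero)
    then show False using g0 by simp
  qed
  have "dot (U g) g = (\<Sum>j\<in>UNIV. if j = k then U g k * of_int (Poly_Mapping.lookup g k) else 0)"
    unfolding dot_def by (rule sum.cong) (auto simp: z)
  then have "U g k * of_int (Poly_Mapping.lookup g k) = 0" using U0[of g] by simp
  then show ?thesis using gk by simp
qed

lemma scalar: "\<exists>C. \<forall>g. C g \<noteq> 0 \<and> (\<forall>a. A g a = (\<lambda>k. C g * a k))"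
proof -
  have "\<forall>g. \<exists>cu. fst cu \<noteq> 0 \<and> dot (snd cu) g = 0 \<and> (\<forall>a. A g a = (\<lambda>k. fst cu * (a k + dot a g * snd cu k)))"
    using S3 by (metis fst_conv snd_conv)
  then obtain CU where CU: "\<And>g. fst (CU g) \<noteq> 0" "\<And>g. dot (snd (CU g)) g = 0"
     "\<And>g a. A g a = (\<lambda>k. fst (CU g) * (a k + dot a g * snd (CU g) k))"
    by metis
  define C where "C g = fst (CU g)" for g
  define U where "U g = snd (CU g)" for g
  have sh: "\<And>g a. A g a = (\<lambda>k. C g * (a k + dot a g * U g k))" and C0: "\<And>g. C g \<noteq> 0"
    and U0: "\<And>g. dot (U g) g = 0" using CU by (simp_all add: C_def U_def)
  have "A g a = (\<lambda>k. C g * a k)" for g a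
  proof (cases "g = 0")
    case True then show ?thesis by (simp add: sh)
  next
    case False
    then show ?thesis using U_zero[OF sh C0 U0 False] by (simp add: sh)
  qed
  then show ?thesis using C0 by blast
qed


lemma mult_C:
  fixes C :: "('n \<Rightarrow>\<^sub>0 int) \<Rightarrow> 'k"
  assumes Cs: "\<And>g. C g \<noteq> 0" "\<And>g a. A g a = (\<lambda>k. C g * a k)"
  shows "C (\<alpha> + \<beta>) = C \<alpha> * C \<beta>"
proof -
  have dist: "C (\<alpha> + \<beta>) = C \<alpha> * C \<beta>" if ne: "\<alpha> \<noteq> \<beta>" for \<alpha> \<beta>
  proof -
    obtain i where i: "Poly_Mapping.lookup \<alpha> i \<noteq> Poly_Mapping.lookup \<beta> i"
      using ne poly_mapping_eqI by metis
    define e :: "'n \<Rightarrow> 'k" where "e = (\<lambda>j. if j = i then 1 else 0)"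
    define ai :: 'k where "ai = of_int (Poly_Mapping.lookup \<alpha> i)"
    define bi :: 'k where "bi = of_int (Poly_Mapping.lookup \<beta> i)"
    have d: "dot e \<alpha> = ai" "dot e \<beta> = bi" by (simp_all add: e_def ai_def bi_def dot_uv1)
    have "A (\<alpha> + \<beta>) (\<lambda>k. dot e \<beta> * e k - dot e \<alpha> * e k) i
       = dot (A \<alpha> e) \<beta> * A \<beta> e i - dot (A \<beta> e) \<alpha> * A \<alpha> e i" using br by metis
    then have "C (\<alpha> + \<beta>) * (bi * e i - ai * e i) = (C \<alpha> * bi) * (C \<beta> * e i) - (C \<beta> * ai) * (C \<alpha> * e i)"
      by (simp only: Cs(2) dot_smul1 d)
    then have "C (\<alpha> + \<beta>) * (bi - ai) = (C \<alpha> * C \<beta>) * (bi - ai)"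
      by (simp add: e_def algebra_simps)
    moreover have "bi - ai \<noteq> 0" using i by (simp add: ai_def bi_def)
    ultimately show ?thesis by simp
  qed
  show ?thesis
  proof (cases "\<alpha> = \<beta>")
    case False then show ?thesis by (rule dist)
  next
    case True
    show ?thesis
    proof (cases "\<alpha> = 0")
      case True
      have "A 0 (\<lambda>k. 1) = (\<lambda>k. C 0 * 1)" by (simp only: Cs(2))
      then have "C 0 = 1" using A0 by (metis mult_1_right)
      then show ?thesis using True \<open>\<alpha> = \<beta>\<close> by simp
    next
      case False
      obtain i where i: "Poly_Mapping.lookup \<alpha> i \<noteq> 0"
        using False by (metis poly_mapping_eqI lookup_zero)
      define a2 where "a2 = \<alpha> + \<alpha>"
      define a3 where "a3 = \<alpha> + a2"
      define a4 where "a4 = \<alpha> + a3"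
      have l: "Poly_Mapping.lookup a2 i = 2 * Poly_Mapping.lookup \<alpha> i"
         "Poly_Mapping.lookup a3 i = 3 * Poly_Mapping.lookup \<alpha> i"
         "Poly_Mapping.lookup a4 i = 4 * Poly_Mapping.lookup \<alpha> i"
        by (simp_all add: a2_def a3_def a4_def lookup_add)
      have n12: "\<alpha> \<noteq> a2" using l i by auto
      have n13: "\<alpha> \<noteq> a3" using l i by auto
      have n14: "\<alpha> \<noteq> a4" using l i by auto
      have n23: "a2 \<noteq> a3" using l i by auto
      have e5: "\<alpha> + a4 = a2 + a3" by (simp add: a2_def a3_def a4_def ac_simps)
      have "C (\<alpha> + a4) = C \<alpha> * C a4" by (rule dist[OF n14])
      also have "C a4 = C \<alpha> * C a3" unfolding a4_def by (rule dist[OF n13])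
      also have "C a3 = C \<alpha> * C a2" unfolding a3_def by (rule dist[OF n12])
      finally have "C (a2 + a3) = C \<alpha> * (C \<alpha> * (C \<alpha> * C a2))" using e5 by simp
      moreover have "C (a2 + a3) = C a2 * C a3" by (rule dist[OF n23])
      moreover have "C a3 = C \<alpha> * C a2" unfolding a3_def by (rule dist[OF n12])
      ultimately have "C \<alpha> * (C \<alpha> * (C \<alpha> * C a2)) = C a2 * (C \<alpha> * C a2)"
        by metis
      then have "C \<alpha> * C \<alpha> = C a2" using Cs(1)[of \<alpha>] Cs(1)[of a2] by (rule alg3)
      then show ?thesis using True by (simp add: a2_def)
    qed
  qed
qed

lemma chi_form:
  fixes C :: "('n \<Rightarrow>\<^sub>0 int) \<Rightarrow> 'k"
  assumes Cs: "\<And>g. C g \<noteq> 0" "\<And>g a. A g a = (\<lambda>k. C g * a k)"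
  shows "C \<alpha> = (\<Prod>i\<in>UNIV. C (Poly_Mapping.single i 1) powi Poly_Mapping.lookup \<alpha> i)"
proof -
  note M = mult_C[OF Cs]
  have C0: "C 0 = 1"
  proof -
    have "C (0 + 0) = C 0 * C 0" by (rule M)
    then show ?thesis using Cs(1)[of 0] by simp
  qed
  have Cs1: "C (Poly_Mapping.single i m) = C (Poly_Mapping.single i 1) powi m" for i m
  proof (induction m rule: int_induct[where k=0])
    case base then show ?case by (simp add: C0)
  next
    case (step1 m)
    have "C (Poly_Mapping.single i (m + 1)) = C (Poly_Mapping.single i m) * C (Poly_Mapping.single i 1)"
      by (simp add: single_add M)
    then show ?case using step1 Cs(1) by (simp add: power_int_add)
  next
    case (step2 m)
    have "C (Poly_Mapping.single i m) = C (Poly_Mapping.single i (m - 1)) * C (Poly_Mapping.single i 1)"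
      by (metis M single_add diff_add_cancel)
    moreover have "C (Poly_Mapping.single i 1) powi m = C (Poly_Mapping.single i 1) powi (m - 1) * C (Poly_Mapping.single i 1)"
      using Cs(1) by (metis power_int_add power_int_1_right diff_add_cancel)
    ultimately show ?case using step2 Cs(1) by simp
  qed
  have Csum: "finite I \<Longrightarrow> C (sum f I) = (\<Prod>i\<in>I. C (f i))" for I and f :: "'n \<Rightarrow> ('n \<Rightarrow>\<^sub>0 int)"
    by (induction I rule: finite_induct) (simp_all add: C0 M)
  have dec: "\<alpha> = (\<Sum>i\<in>UNIV. Poly_Mapping.single i (Poly_Mapping.lookup \<alpha> i))"
    by (rule poly_mapping_eqI) (simp add: lookup_sum lookup_single when_def)
  have "C \<alpha> = (\<Prod>i\<in>UNIV. C (Poly_Mapping.single i (Poly_Mapping.lookup \<alpha> i)))"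
    by (subst dec) (simp add: Csum)
  also have "\<dots> = (\<Prod>i\<in>UNIV. C (Poly_Mapping.single i 1) powi Poly_Mapping.lookup \<alpha> i)"
    by (intro prod.cong refl Cs1)
  finally show ?thesis .
qed

end


type_synonym ('n, 'k) lp = "('n, 'k) laurent"

definition X :: "('n \<Rightarrow>\<^sub>0 int) \<Rightarrow> ('n, 'k::comm_ring_1) laurent" where
  "X a = Poly_Mapping.single a 1"

definition diag :: "(('n \<Rightarrow>\<^sub>0 int) \<Rightarrow> 'k::comm_ring_1) \<Rightarrow> ('n, 'k) laurent \<Rightarrow> ('n, 'k) laurent" where
  "diag w f = Poly_Mapping.mapp (\<lambda>e c. w e * c) f"

lemma lookup_diag [simp]: "Poly_Mapping.lookup (diag w f) e = w e * Poly_Mapping.lookup f e"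
  by (auto simp: diag_def lookup_mapp in_keys_iff when_def)

lemma lookup_lcst_mult [simp]: "Poly_Mapping.lookup (lcst c * f) e = c * Poly_Mapping.lookup f e"
proof -
  have "lcst c * f = Poly_Mapping.map ((*) c) f"
    by (simp add: lcst_def mult_map_scale_conv_mult)
  then show ?thesis by (simp add: map.rep_eq when_def)
qed

lemma lcst_mult_eq_diag: "lcst c * f = diag (\<lambda>e. c) f"
  by (rule poly_mapping_eqI) simp

lemma lcst_mult_lcst [simp]: "lcst c * lcst d = lcst (c * d)"
  by (simp add: lcst_def mult_single)
lemma lcst_add: "lcst (c + d) = lcst c + lcst d"
  by (simp add: lcst_def single_add)
lemma lcst_0 [simp]: "lcst 0 = 0"
  by (simp add: lcst_def)
lemma lcst_1 [simp]: "lcst 1 = 1"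
  by (simp add: lcst_def)
lemma lcst_diff: "lcst (c - d) = lcst c - lcst d"
  by (simp add: lcst_def single_diff)

lemma X_mult: "X a * X b = X (a + b)"
  by (simp add: X_def mult_single)
lemma X_0 [simp]: "X 0 = 1"
  by (simp add: X_def)
lemma xvar_X: "xvar i = X (Poly_Mapping.single i 1)"
  by (simp add: xvar_def X_def)
lemma single_X: "Poly_Mapping.single a c = lcst c * X a"
  by (simp add: lcst_def X_def mult_single)

lemma diag_add: "diag w (f + g) = diag w f + diag w g"
  by (rule poly_mapping_eqI) (simp add: lookup_add distrib_left)
lemma diag_diff: "diag w (f - g) = diag w f - diag w g"
  by (rule poly_mapping_eqI) (simp add: lookup_minus right_diff_distrib)
lemma diag_0 [simp]: "diag w 0 = 0"
  by (rule poly_mapping_eqI) simp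
lemma diag_single: "diag w (Poly_Mapping.single a c) = Poly_Mapping.single a (w a * c)"
  by (rule poly_mapping_eqI) (simp add: lookup_single when_def)
lemma diag_X: "diag w (X a) = lcst (w a) * X a"
  unfolding X_def diag_single by (simp add: lcst_def mult_single)
lemma diag_diag: "diag w (diag v f) = diag (\<lambda>e. w e * v e) f"
  by (rule poly_mapping_eqI) (simp add: mult.assoc)
lemma diag_comm: "diag w (diag v f) = diag v (diag w f)"
  by (simp add: diag_diag mult.commute)
lemma diag_lcst: "diag w (lcst c * f) = lcst c * diag w f"
  by (rule poly_mapping_eqI) (simp only: lookup_diag lookup_lcst_mult mult.left_commute)
lemma diag_one_w: "diag (\<lambda>e. 1) f = f"
  by (rule poly_mapping_eqI) simp
lemma diag_cong: "(\<And>e. w e = v e) \<Longrightarrow> diag w f = diag v f"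
  by (rule poly_mapping_eqI) simp
lemma diag_wadd: "diag (\<lambda>e. w e + v e) f = diag w f + diag v f"
  by (rule poly_mapping_eqI) (simp add: lookup_add distrib_right)
lemma diag_wdiff: "diag (\<lambda>e. w e - v e) f = diag w f - diag v f"
  by (rule poly_mapping_eqI) (simp add: lookup_minus left_diff_distrib)
lemma diag_wsmul: "diag (\<lambda>e. c * w e) f = lcst c * diag w f"
  by (rule poly_mapping_eqI) (simp add: mult.assoc)

lemma update_is_add: "a \<notin> Poly_Mapping.keys f \<Longrightarrow> Poly_Mapping.update a b f = f + Poly_Mapping.single a b"
  by (rule poly_mapping_eqI) (auto simp: lookup_update lookup_add lookup_single when_def in_keys_iff)

lemma poly_induct [case_names zero add]:
  assumes "P 0" "\<And>f a b. P f \<Longrightarrow> P (f + Poly_Mapping.single a b)"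
  shows "P f"
proof (induction f rule: update_induct)
  case const then show ?case using assms(1) .
next
  case (update f a b)
  then show ?case using assms(2)[of f a b] update_is_add[of a f b] by simp
qed

lemma diag_mult:
  assumes w: "\<And>a b. w (a + b) = w a * w b"
  shows "diag w (f * g) = diag w f * diag w g"
proof (induction f rule: poly_induct)
  case zero then show ?case by simp
next
  case (add f a b)
  have "diag w (Poly_Mapping.single a b * g) = diag w (Poly_Mapping.single a b) * diag w g"
  proof (induction g rule: poly_induct)
    case zero then show ?case by simp
  next
    case (add g a' b')
    then show ?case by (simp add: distrib_left diag_add mult_single diag_single w ac_simps)
  qed
  then show ?case using add by (simp add: distrib_right diag_add)
qed

lemma diag_leib:
  assumes w: "\<And>a b. w (a + b) = w a + w b"
  shows "diag w (f * g) = diag w f * g + f * diag w g"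
proof (induction f rule: poly_induct)
  case zero then show ?case by simp
next
  case (add f a b)
  have "diag w (Poly_Mapping.single a b * g) = diag w (Poly_Mapping.single a b) * g + Poly_Mapping.single a b * diag w g"
  proof (induction g rule: poly_induct)
    case zero then show ?case by simp
  next
    case (add g a' b')
    have "diag w (Poly_Mapping.single a b * Poly_Mapping.single a' b') =
       diag w (Poly_Mapping.single a b) * Poly_Mapping.single a' b' + Poly_Mapping.single a b * diag w (Poly_Mapping.single a' b')"
      by (simp add: mult_single diag_single w single_add[symmetric] algebra_simps)
    then show ?case using add by (simp add: distrib_left diag_add algebra_simps)
  qed
  then show ?case using add by (simp add: distrib_right diag_add algebra_simps)
qed


lemma sum_single_keys: "(\<Sum>e\<in>Poly_Mapping.keys f. Poly_Mapping.single e (w e * Poly_Mapping.lookup f e)) = diag w f"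
proof (rule poly_mapping_eqI)
  fix k
  have "Poly_Mapping.lookup (\<Sum>e\<in>Poly_Mapping.keys f. Poly_Mapping.single e (w e * Poly_Mapping.lookup f e)) k
      = (\<Sum>e\<in>Poly_Mapping.keys f. if e = k then w k * Poly_Mapping.lookup f k else 0)"
    by (simp add: lookup_sum lookup_single when_def)
  also have "\<dots> = w k * Poly_Mapping.lookup f k"
    by (simp add: in_keys_iff)
  finally show "Poly_Mapping.lookup (\<Sum>e\<in>Poly_Mapping.keys f. Poly_Mapping.single e (w e * Poly_Mapping.lookup f e)) k
      = Poly_Mapping.lookup (diag w f) k" by simp
qed

lemma poly_expand: "(f::('n, 'k::comm_ring_1) laurent) = (\<Sum>e\<in>Poly_Mapping.keys f. Poly_Mapping.single e (Poly_Mapping.lookup f e))"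
  using sum_single_keys[where f=f and w="\<lambda>e. 1"] by (simp add: diag_one_w)

definition hw :: "'n \<Rightarrow> ('n \<Rightarrow>\<^sub>0 int) \<Rightarrow> 'k::comm_ring_1" where
  "hw i e = of_int (Poly_Mapping.lookup e i)"

lemma hw_add: "hw i (a + b) = hw i a + hw i b"
  by (simp add: hw_def lookup_add)

lemma Hdiag_diag: "Hdiag i f = diag (hw i) f"
proof -
  have "Hdiag i f = (\<Sum>e\<in>Poly_Mapping.keys f. xvar i * Poly_Mapping.single (e - Poly_Mapping.single i 1)
                                   (of_int (Poly_Mapping.lookup e i) * Poly_Mapping.lookup f e))"
    by (simp add: Hdiag_def pderiv_i_def sum_distrib_left)
  also have "\<dots> = (\<Sum>e\<in>Poly_Mapping.keys f. Poly_Mapping.single e (hw i e * Poly_Mapping.lookup f e))"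
    by (rule sum.cong) (simp_all add: xvar_def mult_single hw_def)
  finally show ?thesis by (simp add: sum_single_keys)
qed

lemma Hdiag_fun: "Hdiag i = diag (hw i)"
  by (rule ext) (rule Hdiag_diag)

definition chi :: "('n \<Rightarrow> 'k::field) \<Rightarrow> ('n \<Rightarrow>\<^sub>0 int) \<Rightarrow> 'k" where
  "chi l e = (\<Prod>i\<in>Poly_Mapping.keys e. l i powi Poly_Mapping.lookup e i)"

lemma tor_diag: "tor l f = diag (chi l) f"
  unfolding tor_def chi_def by (rule sum_single_keys)

lemma tor_fun: "tor l = diag (chi l)"
  by (rule ext) (rule tor_diag)

lemma chi_UNIV: "chi l (e::'n::finite \<Rightarrow>\<^sub>0 int) = (\<Prod>i\<in>UNIV. l i powi Poly_Mapping.lookup e i)"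
  unfolding chi_def by (rule prod.mono_neutral_left) (auto simp: in_keys_iff)

lemma chi_add: assumes "\<And>i. l i \<noteq> 0" shows "chi l (a + b :: 'n::finite \<Rightarrow>\<^sub>0 int) = chi l a * chi l b"
  by (simp add: chi_UNIV lookup_add power_int_add assms prod.distrib)

lemma chi_nz: assumes "\<And>i. l i \<noteq> 0" shows "chi l (a :: 'n::finite \<Rightarrow>\<^sub>0 int) \<noteq> 0"
  by (simp add: chi_UNIV assms)

lemma chi_inv: assumes "\<And>i. l i \<noteq> 0"
  shows "chi (\<lambda>i. inverse (l i)) (a :: 'n::finite \<Rightarrow>\<^sub>0 int) * chi l a = 1"
proof -
  have "chi (\<lambda>i. inverse (l i)) a * chi l a = (\<Prod>i\<in>UNIV. inverse (l i) powi Poly_Mapping.lookup a i * l i powi Poly_Mapping.lookup a i)"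
    by (simp add: chi_UNIV prod.distrib)
  also have "\<dots> = 1" by (rule prod.neutral) (simp add: power_int_inverse assms)
  finally show ?thesis .
qed

section \<open>Derivations\<close>

lemma lsmult_eq: "lsmult c f = lcst c * f"
  by (simp add: lsmult_def)

lemma is_derI:
  assumes "\<And>f g. D (f + g) = D f + D g" "\<And>c f. D (lcst c * f) = lcst c * D f"
    "\<And>f g. D (f * g) = D f * g + f * D g"
  shows "is_der D"
  using assms by (simp add: is_der_def lsmult_eq)

lemma is_derD1: "is_der D \<Longrightarrow> D (f + g) = D f + D g"
  unfolding is_der_def by blast
lemma is_derD2: "is_der D \<Longrightarrow> D (lcst c * f) = lcst c * D f"
  unfolding is_der_def lsmult_def by blast
lemma is_derD3: "is_der D \<Longrightarrow> D (f * g) = D f * g + f * D g"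
  unfolding is_der_def by blast

lemma is_der_diag: assumes "\<And>a b. w (a + b) = w a + w b" shows "is_der (diag w)"
  by (rule is_derI) (simp_all only: diag_add diag_lcst diag_leib assms)

lemma is_der_Hdiag: "is_der (Hdiag i)"
  unfolding Hdiag_fun by (rule is_der_diag) (rule hw_add)

lemma is_der_lmult: assumes "is_der D" shows "is_der (\<lambda>f. g * D f)"
proof (rule is_derI)
  show "g * D (f + h) = g * D f + g * D h" for f h by (simp add: is_derD1[OF assms] algebra_simps)
  show "g * D (lcst c * f) = lcst c * (g * D f)" for c f by (simp only: is_derD2[OF assms] mult.left_commute)
  show "g * D (f * h) = g * D f * h + f * (g * D h)" for f h by (simp add: is_derD3[OF assms] algebra_simps)
qed

lemma is_der_dadd: assumes "is_der D" "is_der E" shows "is_der (dadd D E)"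
proof (rule is_derI)
  show "dadd D E (f + h) = dadd D E f + dadd D E h" for f h
    by (simp add: dadd_def is_derD1[OF assms(1)] is_derD1[OF assms(2)] algebra_simps)
  show "dadd D E (lcst c * f) = lcst c * dadd D E f" for c f
    by (simp only: dadd_def is_derD2[OF assms(1)] is_derD2[OF assms(2)] distrib_left)
  show "dadd D E (f * h) = dadd D E f * h + f * dadd D E h" for f h
    by (simp add: dadd_def is_derD3[OF assms(1)] is_derD3[OF assms(2)] algebra_simps)
qed

lemma is_der_dsmult: assumes "is_der D" shows "is_der (dsmult c D)"
  unfolding dsmult_def lsmult_eq by (rule is_der_lmult[OF assms])

lemma is_der_lie_br: assumes "is_der D" "is_der E" shows "is_der (lie_br D E)"
proof (rule is_derI)
  show "lie_br D E (f + h) = lie_br D E f + lie_br D E h" for f h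
    by (simp add: lie_br_def is_derD1[OF assms(1)] is_derD1[OF assms(2)] algebra_simps)
  show "lie_br D E (lcst c * f) = lcst c * lie_br D E f" for c f
    by (simp only: lie_br_def is_derD2[OF assms(1)] is_derD2[OF assms(2)] right_diff_distrib)
  show "lie_br D E (f * h) = lie_br D E f * h + f * lie_br D E h" for f h
    by (simp add: lie_br_def is_derD3[OF assms(1)] is_derD3[OF assms(2)] is_derD1[OF assms(1)] is_derD1[OF assms(2)] algebra_simps)
qed

lemma is_der_zero: "is_der (\<lambda>f. 0)"
  by (rule is_derI) simp_all

lemma is_der_0: assumes "is_der D" shows "D 0 = 0"
  using is_derD1[OF assms, of 0 0] by simp

lemma is_der_1: assumes "is_der D" shows "D 1 = 0"
  using is_derD3[OF assms, of 1 1] by simp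

lemma is_der_minus: assumes "is_der D" shows "D (f - g) = D f - D g"
  using is_derD1[OF assms, of "f - g" g] by (simp add: algebra_simps)

lemma is_der_sum: assumes "is_der D" shows "D (sum F I) = (\<Sum>i\<in>I. D (F i))"
  by (induction I rule: infinite_finite_induct) (simp_all add: is_der_0[OF assms] is_derD1[OF assms])

definition dsum :: "'i set \<Rightarrow> ('i \<Rightarrow> (('n, 'k::comm_ring_1) laurent \<Rightarrow> ('n, 'k) laurent)) \<Rightarrow> ('n, 'k) laurent \<Rightarrow> ('n, 'k) laurent" where
  "dsum I F = (\<lambda>f. \<Sum>i\<in>I. F i f)"

lemma is_der_dsum: assumes "\<And>i. i \<in> I \<Longrightarrow> is_der (F i)" shows "is_der (dsum I F)"
  using assms
proof (induction I rule: infinite_finite_induct)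
  case (infinite I) then show ?case by (simp add: dsum_def is_der_zero)
next
  case empty then show ?case by (simp add: dsum_def is_der_zero)
next
  case (insert x F')
  have "dsum (insert x F') F = dadd (F x) (dsum F' F)"
    using insert by (simp add: dsum_def dadd_def fun_eq_iff)
  moreover have "is_der (F x)" using insert.prems by simp
  moreover have "is_der (dsum F' F)" using insert by simp
  ultimately show ?case using is_der_dadd by simp
qed



lemma dot_add1f: "dot (\<lambda>k. a k + b k) = (\<lambda>e. dot a e + dot b e)"
  by (rule ext) (rule dot_add1)
lemma dot_diff1f: "dot (\<lambda>k. a k - b k) = (\<lambda>e. dot a e - dot b e)"
  by (rule ext) (rule dot_diff1)
lemma dot_smul1f: "dot (\<lambda>k. t * a k) = (\<lambda>e. t * dot a e)"
  by (rule ext) (rule dot_smul1)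

definition N :: "('n::finite \<Rightarrow>\<^sub>0 int) \<Rightarrow> ('n \<Rightarrow> 'k::comm_ring_1) \<Rightarrow> ('n, 'k) laurent \<Rightarrow> ('n, 'k) laurent" where
  "N \<alpha> a = (\<lambda>f. X \<alpha> * diag (dot a) f)"

lemma is_der_N: "is_der (N \<alpha> a)"
  unfolding N_def by (rule is_der_lmult) (rule is_der_diag, rule dot_add2)

lemma N_xvar: "N \<alpha> a (xvar k) = Poly_Mapping.single (\<alpha> + Poly_Mapping.single k 1) (a k)"
proof -
  have "N \<alpha> a (xvar k) = lcst (a k) * (X \<alpha> * X (Poly_Mapping.single k 1))"
    by (simp add: N_def xvar_X diag_X dot_single2 mult.left_commute)
  then show ?thesis by (simp add: X_mult single_X)
qed

lemma N_inj: assumes "N \<alpha> a = N \<alpha> b" shows "a = b"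
proof
  fix k
  have "N \<alpha> a (xvar k) = N \<alpha> b (xvar k)" using assms by simp
  then show "a k = b k" by (metis N_xvar lookup_single_eq)
qed

lemma N_add: "N \<alpha> (\<lambda>k. a k + b k) = dadd (N \<alpha> a) (N \<alpha> b)"
  by (rule ext) (simp add: N_def dadd_def dot_add1f diag_wadd distrib_left)

lemma N_smul: "N \<alpha> (\<lambda>k. t * a k) = dsmult t (N \<alpha> a)"
  by (rule ext) (simp only: N_def dsmult_def lsmult_eq dot_smul1f diag_wsmul mult.left_commute)

lemma Hdiag_N: "Hdiag i = N 0 (\<lambda>j. if j = i then 1 else 0)"
proof (rule ext)
  fix f
  have "diag (hw i) f = diag (dot (\<lambda>j. if j = i then 1 else 0)) f"
    by (rule diag_cong) (simp add: hw_def dot_uv1)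
  then show "Hdiag i f = N 0 (\<lambda>j. if j = i then 1 else 0) f"
    by (simp add: Hdiag_diag N_def)
qed

lemma br_N: "lie_br (N \<alpha> a) (N \<beta> b) = N (\<alpha> + \<beta>) (\<lambda>k. dot a \<beta> * b k - dot b \<alpha> * a k)"
proof (rule ext)
  fix f
  have la: "diag (dot a) (X \<beta> * g) = lcst (dot a \<beta>) * X \<beta> * g + X \<beta> * diag (dot a) g" for g
    by (simp add: diag_leib dot_add2 diag_X)
  have lb: "diag (dot b) (X \<alpha> * g) = lcst (dot b \<alpha>) * X \<alpha> * g + X \<alpha> * diag (dot b) g" for g
    by (simp add: diag_leib dot_add2 diag_X)
  have r: "diag (dot (\<lambda>k. dot a \<beta> * b k - dot b \<alpha> * a k)) f
      = lcst (dot a \<beta>) * diag (dot b) f - lcst (dot b \<alpha>) * diag (dot a) f"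
    by (simp only: dot_diff1f dot_smul1f diag_wdiff diag_wsmul)
  have "lie_br (N \<alpha> a) (N \<beta> b) f
     = X \<alpha> * (lcst (dot a \<beta>) * X \<beta> * diag (dot b) f + X \<beta> * diag (dot a) (diag (dot b) f))
     - X \<beta> * (lcst (dot b \<alpha>) * X \<alpha> * diag (dot a) f + X \<alpha> * diag (dot b) (diag (dot a) f))"
    by (simp only: lie_br_def N_def la lb)
  also have "\<dots> = X (\<alpha> + \<beta>) * (lcst (dot a \<beta>) * diag (dot b) f - lcst (dot b \<alpha>) * diag (dot a) f)"
    by (simp add: diag_comm[of "dot a"] X_mult[symmetric] algebra_simps)
  also have "\<dots> = N (\<alpha> + \<beta>) (\<lambda>k. dot a \<beta> * b k - dot b \<alpha> * a k) f"
    by (simp only: N_def r)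
  finally show "lie_br (N \<alpha> a) (N \<beta> b) f = N (\<alpha> + \<beta>) (\<lambda>k. dot a \<beta> * b k - dot b \<alpha> * a k) f" .
qed

lemma br_H_N: "lie_br (Hdiag i) (N \<alpha> a) = dsmult (of_int (Poly_Mapping.lookup \<alpha> i)) (N \<alpha> a)"
proof -
  have "lie_br (Hdiag i) (N \<alpha> a) = N (0 + \<alpha>) (\<lambda>k. dot (\<lambda>j. if j = i then 1 else 0) \<alpha> * a k - dot a 0 * (if k = i then 1 else 0))"
    by (simp only: Hdiag_N br_N)
  also have "\<dots> = N \<alpha> (\<lambda>k. of_int (Poly_Mapping.lookup \<alpha> i) * a k)"
    by (simp add: dot_uv1)
  finally show ?thesis by (simp add: N_smul)
qed

definition msr :: "('n::finite \<Rightarrow>\<^sub>0 int) \<Rightarrow> nat" where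
  "msr a = (\<Sum>i\<in>UNIV. nat \<bar>Poly_Mapping.lookup a i\<bar>)"

lemma msr_less:
  assumes "\<And>j. j \<noteq> k \<Longrightarrow> Poly_Mapping.lookup a' j = Poly_Mapping.lookup a j"
    and "nat \<bar>Poly_Mapping.lookup a' k\<bar> < nat \<bar>Poly_Mapping.lookup a k\<bar>"
  shows "msr a' < msr a"
proof -
  have "msr a' = nat \<bar>Poly_Mapping.lookup a' k\<bar> + (\<Sum>i\<in>UNIV - {k}. nat \<bar>Poly_Mapping.lookup a' i\<bar>)"
    unfolding msr_def by (simp add: sum.remove)
  also have "(\<Sum>i\<in>UNIV - {k}. nat \<bar>Poly_Mapping.lookup a' i\<bar>) = (\<Sum>i\<in>UNIV - {k}. nat \<bar>Poly_Mapping.lookup a i\<bar>)"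
    by (rule sum.cong) (simp_all add: assms(1))
  also have "msr a = nat \<bar>Poly_Mapping.lookup a k\<bar> + (\<Sum>i\<in>UNIV - {k}. nat \<bar>Poly_Mapping.lookup a i\<bar>)"
    unfolding msr_def by (simp add: sum.remove)
  ultimately show ?thesis using assms(2) by simp
qed

lemma der_unique:
  assumes D: "is_der D" and E: "is_der E" and eq: "\<And>k. D (xvar k) = E (xvar k)"
  shows "D = (E :: ('n::finite, 'k::comm_ring_1) laurent \<Rightarrow> _)"
proof -
  define F where "F f = D f - E f" for f
  have F1: "F (f + g) = F f + F g" for f g by (simp add: F_def is_derD1[OF D] is_derD1[OF E])
  have F2: "F (lcst c * f) = lcst c * F f" for c f by (simp add: F_def is_derD2[OF D] is_derD2[OF E] right_diff_distrib)
  have F3: "F (f * g) = F f * g + f * F g" for f g by (simp add: F_def is_derD3[OF D] is_derD3[OF E] algebra_simps)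
  have Fx: "F (X (Poly_Mapping.single k 1)) = 0" for k using eq[of k] by (simp add: F_def xvar_X)
  have FX: "F (X \<alpha>) = 0" for \<alpha>
  proof (induction "msr \<alpha>" arbitrary: \<alpha> rule: less_induct)
    case less
    show ?case
    proof (cases "\<alpha> = 0")
      case True then show ?thesis by (simp add: F_def is_der_1[OF D] is_der_1[OF E])
    next
      case False
      then obtain k where k: "Poly_Mapping.lookup \<alpha> k \<noteq> 0" by (metis poly_mapping_eqI lookup_zero)
      define \<epsilon> :: "'n \<Rightarrow>\<^sub>0 int" where "\<epsilon> = Poly_Mapping.single k 1"
      show ?thesis
      proof (cases "Poly_Mapping.lookup \<alpha> k > 0")
        case True
        define \<alpha>' where "\<alpha>' = \<alpha> - \<epsilon>"
        have "msr \<alpha>' < msr \<alpha>"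
          by (rule msr_less[of k]) (use True in \<open>auto simp: \<alpha>'_def \<epsilon>_def lookup_minus lookup_single\<close>)
        then have "F (X \<alpha>') = 0" by (rule less)
        moreover have "F (X \<alpha>) = F (X \<alpha>') * X \<epsilon> + X \<alpha>' * F (X \<epsilon>)"
        proof -
          have eqX: "X \<alpha> = X \<alpha>' * X \<epsilon>" by (simp add: X_mult \<alpha>'_def)
          show ?thesis by (simp only: eqX F3)
        qed
        ultimately show ?thesis using Fx by (simp add: \<epsilon>_def)
      next
        case False
        define \<alpha>' where "\<alpha>' = \<alpha> + \<epsilon>"
        have "msr \<alpha>' < msr \<alpha>"
          by (rule msr_less[of k]) (use False k in \<open>auto simp: \<alpha>'_def \<epsilon>_def lookup_add lookup_single\<close>)
        then have "F (X \<alpha>') = 0" by (rule less)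
        moreover have "F (X \<alpha>') = F (X \<alpha>) * X \<epsilon> + X \<alpha> * F (X \<epsilon>)"
        proof -
          have eqX: "X \<alpha>' = X \<alpha> * X \<epsilon>" by (simp add: X_mult \<alpha>'_def)
          show ?thesis by (simp only: eqX F3)
        qed
        ultimately have "F (X \<alpha>) * X \<epsilon> = 0" using Fx by (simp add: \<epsilon>_def)
        then have "F (X \<alpha>) * (X \<epsilon> * X (- \<epsilon>)) = 0" by (metis mult.assoc mult_zero_left)
        then show ?thesis by (simp add: X_mult)
      qed
    qed
  qed
  have "F f = 0" for f
  proof (induction f rule: poly_induct)
    case zero then show ?case by (simp add: F_def is_der_0[OF D] is_der_0[OF E])
  next
    case (add f a b)
    then show ?case by (simp add: F1 single_X F2 FX)
  qed
  then show ?thesis by (auto simp: F_def fun_eq_iff)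
qed


lemma weight:
  fixes D :: "('n::finite, 'k::field_char_0) laurent \<Rightarrow> ('n, 'k) laurent"
  assumes D: "is_der D" and H: "\<And>i. lie_br (Hdiag i) D = dsmult (of_int (Poly_Mapping.lookup \<alpha> i)) D"
  shows "D = N \<alpha> (\<lambda>k. Poly_Mapping.lookup (D (xvar k)) (\<alpha> + Poly_Mapping.single k 1))"
proof (rule der_unique[OF D is_der_N])
  fix k
  define f where "f = D (xvar k)"
  define \<epsilon> :: "'n \<Rightarrow>\<^sub>0 int" where "\<epsilon> = Poly_Mapping.single k 1"
  have Hf: "Hdiag i f = lcst (of_int (Poly_Mapping.lookup \<alpha> i) + hw i \<epsilon>) * f" for i
  proof -
    have hx: "Hdiag i (xvar k) = lcst (hw i \<epsilon>) * xvar k"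
      by (simp add: Hdiag_diag xvar_X diag_X \<epsilon>_def)
    have "lie_br (Hdiag i) D (xvar k) = dsmult (of_int (Poly_Mapping.lookup \<alpha> i)) D (xvar k)"
      using H by simp
    then have "Hdiag i f - lcst (hw i \<epsilon>) * f = lcst (of_int (Poly_Mapping.lookup \<alpha> i)) * f"
      by (simp add: lie_br_def dsmult_def lsmult_eq hx is_derD2[OF D] f_def)
    then show ?thesis by (simp add: lcst_add algebra_simps)
  qed
  have "f = Poly_Mapping.single (\<alpha> + \<epsilon>) (Poly_Mapping.lookup f (\<alpha> + \<epsilon>))"
  proof (rule poly_mapping_eqI)
    fix e
    show "Poly_Mapping.lookup f e = Poly_Mapping.lookup (Poly_Mapping.single (\<alpha> + \<epsilon>) (Poly_Mapping.lookup f (\<alpha> + \<epsilon>))) e"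
    proof (cases "e = \<alpha> + \<epsilon>")
      case True then show ?thesis by simp
    next
      case False
      then obtain i where i: "Poly_Mapping.lookup e i \<noteq> Poly_Mapping.lookup (\<alpha> + \<epsilon>) i"
        by (metis poly_mapping_eqI)
      have "Poly_Mapping.lookup (Hdiag i f) e = Poly_Mapping.lookup (lcst (of_int (Poly_Mapping.lookup \<alpha> i) + hw i \<epsilon>) * f) e"
        using Hf by simp
      then have "hw i e * Poly_Mapping.lookup f e = (of_int (Poly_Mapping.lookup \<alpha> i) + hw i \<epsilon>) * Poly_Mapping.lookup f e"
        by (simp add: Hdiag_diag)
      then have "(hw i e - (of_int (Poly_Mapping.lookup \<alpha> i) + hw i \<epsilon>)) * Poly_Mapping.lookup f e = 0"
        by (simp add: algebra_simps)
      moreover have "hw i e - (of_int (Poly_Mapping.lookup \<alpha> i) + hw i \<epsilon>) \<noteq> (0::'k)"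
      proof -
        have "Poly_Mapping.lookup e i - (Poly_Mapping.lookup \<alpha> i + Poly_Mapping.lookup \<epsilon> i) \<noteq> 0"
          using i by (simp add: lookup_add)
        then have "(of_int (Poly_Mapping.lookup e i - (Poly_Mapping.lookup \<alpha> i + Poly_Mapping.lookup \<epsilon> i)) :: 'k) \<noteq> 0"
          by (simp only: of_int_eq_0_iff) simp
        then show ?thesis by (simp add: hw_def)
      qed
      ultimately have "Poly_Mapping.lookup f e = 0" by simp
      then show ?thesis using False by (simp add: lookup_single)
    qed
  qed
  then show "D (xvar k) = N \<alpha> (\<lambda>k. Poly_Mapping.lookup (D (xvar k)) (\<alpha> + Poly_Mapping.single k 1)) (xvar k)"
    by (simp add: N_xvar f_def \<epsilon>_def)
qed

lemma decomp:
  assumes D: "is_der D"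
  shows "D = dsum (SIGMA k:UNIV. Poly_Mapping.keys (D (xvar k)))
     (\<lambda>(k, \<beta>). N (\<beta> - Poly_Mapping.single k 1) (\<lambda>j. if j = k then Poly_Mapping.lookup (D (xvar k)) \<beta> else 0))"
    (is "D = dsum ?S ?F")
proof (rule der_unique[OF D is_der_dsum])
  show "is_der (?F i)" for i by (cases i) (simp add: is_der_N)
  fix j
  have "dsum ?S ?F (xvar j) = (\<Sum>k\<in>UNIV. \<Sum>\<beta>\<in>Poly_Mapping.keys (D (xvar k)).
        N (\<beta> - Poly_Mapping.single k 1) (\<lambda>j. if j = k then Poly_Mapping.lookup (D (xvar k)) \<beta> else 0) (xvar j))"
    unfolding dsum_def by (subst sum.Sigma) (auto simp: split_beta)
  also have "\<dots> = (\<Sum>k\<in>UNIV. if k = j then (\<Sum>\<beta>\<in>Poly_Mapping.keys (D (xvar k)).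
        Poly_Mapping.single \<beta> (Poly_Mapping.lookup (D (xvar k)) \<beta>)) else 0)"
    by (rule sum.cong) (auto simp: N_xvar intro!: sum.neutral)
  also have "\<dots> = D (xvar j)" by (simp add: poly_expand[symmetric])
  finally show "D (xvar j) = dsum ?S ?F (xvar j)" by simp
qed



section \<open>Torus conjugation\<close>

definition cj :: "('n \<Rightarrow> 'k::field) \<Rightarrow> (('n, 'k) laurent \<Rightarrow> ('n, 'k) laurent) \<Rightarrow> ('n, 'k) laurent \<Rightarrow> ('n, 'k) laurent" where
  "cj l D = (\<lambda>f. tor l (D (tor (\<lambda>i. inverse (l i)) f)))"

lemma tor_add: "tor l (f + g) = tor l f + tor l g"
  by (simp add: tor_fun diag_add)
lemma tor_diff: "tor l (f - g) = tor l f - tor l g"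
  by (simp add: tor_fun diag_diff)
lemma tor_lcst: "tor l (lcst c * f) = lcst c * tor l f"
  by (simp add: tor_fun diag_lcst)
lemma tor_sum: "tor l (sum F I) = (\<Sum>i\<in>I. tor l (F i))"
  by (induction I rule: infinite_finite_induct) (simp_all add: tor_fun diag_add)
lemma tor_0: "tor l 0 = 0"
  by (simp add: tor_fun)

context
  fixes l :: "'n::finite \<Rightarrow> 'k::field"
  assumes l0: "\<And>i. l i \<noteq> 0"
begin

lemma tor_mult: "tor l (f * g) = tor l f * tor l g"
  by (simp add: tor_fun diag_mult chi_add l0)

lemma l0': "inverse (l i) \<noteq> 0"
  using l0 by simp

lemma tor_inv1: "tor l (tor (\<lambda>i. inverse (l i)) f) = f"
  by (rule poly_mapping_eqI) (simp add: tor_diag mult.assoc[symmetric] chi_inv[OF l0] mult.commute[of "chi l _"])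

lemma tor_inv2: "tor (\<lambda>i. inverse (l i)) (tor l f) = f"
  by (rule poly_mapping_eqI) (simp add: tor_diag mult.assoc[symmetric] chi_inv[OF l0])

lemma inv_tor: "inv (tor l) = tor (\<lambda>i. inverse (l i))"
  by (rule inv_equality) (simp_all add: tor_inv1 tor_inv2)

lemma tor'_mult: "tor (\<lambda>i. inverse (l i)) (f * g) = tor (\<lambda>i. inverse (l i)) f * tor (\<lambda>i. inverse (l i)) g"
  unfolding tor_fun by (rule diag_mult, rule chi_add, rule l0')

lemma is_der_cj: assumes D: "is_der D" shows "is_der (cj l D)"
proof (rule is_derI)
  show "cj l D (f + g) = cj l D f + cj l D g" for f g
    by (simp add: cj_def tor_add is_derD1[OF D])
  show "cj l D (lcst c * f) = lcst c * cj l D f" for c f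
    by (simp add: cj_def tor_lcst is_derD2[OF D])
  show "cj l D (f * g) = cj l D f * g + f * cj l D g" for f g
    by (simp add: cj_def tor'_mult is_derD3[OF D] tor_add tor_mult tor_inv1)
qed

lemma cj_N: "cj l (N \<alpha> a) = N \<alpha> (\<lambda>k. chi l \<alpha> * a k)"
proof (rule ext)
  fix f
  have "cj l (N \<alpha> a) f = diag (chi l) (X \<alpha>) * diag (chi l) (diag (dot a) (diag (chi (\<lambda>i. inverse (l i))) f))"
    by (simp add: cj_def N_def tor_mult tor_fun[symmetric])
  also have "diag (chi l) (diag (dot a) (diag (chi (\<lambda>i. inverse (l i))) f)) = diag (dot a) f"
    by (simp add: diag_diag) (rule diag_cong, simp add: chi_inv[OF l0] mult.commute[of "chi l _"])
  also have "diag (chi l) (X \<alpha>) = lcst (chi l \<alpha>) * X \<alpha>" by (rule diag_X)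
  finally show "cj l (N \<alpha> a) f = N \<alpha> (\<lambda>k. chi l \<alpha> * a k) f"
    by (simp only: N_def dot_smul1f diag_wsmul) (simp add: ac_simps)
qed

lemma cj_Hdiag: "cj l (Hdiag i) = Hdiag i"
  by (simp add: Hdiag_N cj_N chi_def)

end



lemma Wn_iff: "D \<in> Wn \<longleftrightarrow> is_der D"
  by (simp add: Wn_def)

lemma cj_dadd: "cj l (dadd D E) = dadd (cj l D) (cj l E)"
  by (rule ext) (simp add: cj_def dadd_def tor_add)

lemma cj_dsmult: "cj l (dsmult c D) = dsmult c (cj l D)"
  by (rule ext) (simp add: cj_def dsmult_def lsmult_eq tor_lcst)

context
  fixes l :: "'n::finite \<Rightarrow> 'k::field"
  assumes l0: "\<And>i. l i \<noteq> 0"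
begin

lemma cj_lie_br: "cj l (lie_br D E) = lie_br (cj l D) (cj l E)"
  by (rule ext) (simp add: cj_def lie_br_def tor_diff tor_inv2[OF l0])

lemma cj_cj: "cj l (cj (\<lambda>i. inverse (l i)) D) = D"
  by (rule ext) (simp add: cj_def tor_inv1[OF l0] tor_inv2[OF l0])

lemma cj_cj': "cj (\<lambda>i. inverse (l i)) (cj l D) = D"
  by (rule ext) (simp add: cj_def tor_inv1[OF l0] tor_inv2[OF l0])

lemma torus_fun_eq: "(\<lambda>\<delta>. tor l \<circ> \<delta> \<circ> inv (tor l)) = cj l"
  by (rule ext)+ (simp add: cj_def inv_tor[OF l0])

lemma cj_lie_aut: "restrict (cj l) Wn \<in> lie_aut"
proof -
  have l0': "\<And>i. inverse (l i) \<noteq> 0" using l0 by simp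
  have bij: "bij_betw (restrict (cj l) Wn) Wn Wn"
  proof (rule bij_betw_byWitness[where f'="restrict (cj (\<lambda>i. inverse (l i))) Wn"])
    show "\<forall>a\<in>Wn. restrict (cj (\<lambda>i. inverse (l i))) Wn (restrict (cj l) Wn a) = a"
      by (auto simp: Wn_iff is_der_cj[OF l0] cj_cj')
    show "\<forall>a\<in>Wn. restrict (cj l) Wn (restrict (cj (\<lambda>i. inverse (l i))) Wn a) = a"
      by (auto simp: Wn_iff is_der_cj[OF l0'] cj_cj)
    show "restrict (cj l) Wn ` Wn \<subseteq> Wn" by (auto simp: Wn_iff is_der_cj[OF l0])
    show "restrict (cj (\<lambda>i. inverse (l i))) Wn ` Wn \<subseteq> Wn" by (auto simp: Wn_iff is_der_cj[OF l0'])
  qed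
  show ?thesis unfolding lie_aut_def
    using bij by (auto simp: Wn_iff is_der_dadd is_der_dsmult is_der_lie_br cj_dadd cj_dsmult cj_lie_br)
qed

end

lemma torus_sub: "torus_W \<subseteq> {\<phi> \<in> (lie_aut :: ((('n::finite, 'k::field_char_0) laurent \<Rightarrow> ('n, 'k) laurent) \<Rightarrow>
        (('n, 'k) laurent \<Rightarrow> ('n, 'k) laurent)) set). \<forall>i. \<phi> (Hdiag i) = Hdiag i}"
proof
  fix \<phi> :: "(('n, 'k) laurent \<Rightarrow> ('n, 'k) laurent) \<Rightarrow> (('n, 'k) laurent \<Rightarrow> ('n, 'k) laurent)"
  assume "\<phi> \<in> torus_W"
  then obtain l where l0: "\<forall>i. l i \<noteq> 0" and phi: "\<phi> = restrict (\<lambda>\<delta>. tor l \<circ> \<delta> \<circ> inv (tor l)) Wn"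
    unfolding torus_W_def by blast
  have phi': "\<phi> = restrict (cj l) Wn" using phi torus_fun_eq[of l] l0 by simp
  have hin: "Hdiag i \<in> (Wn :: ((('n, 'k) laurent \<Rightarrow> _) set))" for i by (simp add: Wn_iff is_der_Hdiag)
  have "\<phi> (Hdiag i) = Hdiag i" for i
    using hin[of i] cj_Hdiag[of l i] l0 by (simp add: phi')
  moreover have "\<phi> \<in> lie_aut" using cj_lie_aut[of l] l0 by (simp add: phi')
  ultimately show "\<phi> \<in> {\<phi> \<in> lie_aut. \<forall>i. \<phi> (Hdiag i) = Hdiag i}" by simp
qed



lemma cj_dsum: "cj l (dsum S F) = dsum S (\<lambda>i. cj l (F i))"
  by (rule ext) (simp add: cj_def dsum_def tor_sum)

lemma dsum_insert: "finite S \<Longrightarrow> x \<notin> S \<Longrightarrow> dsum (insert x S) F = dadd (F x) (dsum S F)"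
  by (rule ext) (simp add: dsum_def dadd_def)

context
  fixes \<phi> :: "(('n::finite, 'k::field_char_0) laurent \<Rightarrow> ('n, 'k) laurent) \<Rightarrow> (('n, 'k) laurent \<Rightarrow> ('n, 'k) laurent)"
  assumes phi: "\<phi> \<in> lie_aut" and fixH: "\<And>i. \<phi> (Hdiag i) = Hdiag i"
begin

lemma bij: "bij_betw \<phi> Wn Wn" using phi by (simp add: lie_aut_def)
lemma padd: "D \<in> Wn \<Longrightarrow> E \<in> Wn \<Longrightarrow> \<phi> (dadd D E) = dadd (\<phi> D) (\<phi> E)" using phi by (simp add: lie_aut_def)
lemma psmul: "D \<in> Wn \<Longrightarrow> \<phi> (dsmult c D) = dsmult c (\<phi> D)" using phi by (simp add: lie_aut_def)
lemma pbr: "D \<in> Wn \<Longrightarrow> E \<in> Wn \<Longrightarrow> \<phi> (lie_br D E) = lie_br (\<phi> D) (\<phi> E)" using phi by (simp add: lie_aut_def)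
lemma pext: "\<phi> \<in> extensional Wn" using phi by (simp add: lie_aut_def)
lemma pin: "D \<in> Wn \<Longrightarrow> \<phi> D \<in> Wn" using bij bij_betwE by blast
lemma pinj: "D \<in> Wn \<Longrightarrow> E \<in> Wn \<Longrightarrow> \<phi> D = \<phi> E \<Longrightarrow> D = E"
  using bij by (meson bij_betw_def inj_onD)
lemma psurj: "E \<in> Wn \<Longrightarrow> \<exists>D\<in>Wn. \<phi> D = E"
  using bij by (metis bij_betw_def imageE)

lemma Nin: "N \<alpha> a \<in> (Wn :: (('n, 'k) laurent \<Rightarrow> _) set)" by (simp add: Wn_iff is_der_N)
lemma Hin: "Hdiag i \<in> (Wn :: (('n, 'k) laurent \<Rightarrow> _) set)" by (simp add: Wn_iff is_der_Hdiag)

definition AA :: "('n \<Rightarrow>\<^sub>0 int) \<Rightarrow> ('n \<Rightarrow> 'k) \<Rightarrow> ('n \<Rightarrow> 'k)" where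
  "AA \<alpha> a = (\<lambda>k. Poly_Mapping.lookup (\<phi> (N \<alpha> a) (xvar k)) (\<alpha> + Poly_Mapping.single k 1))"

lemma weight_phi:
  assumes "D \<in> Wn" "\<And>i. lie_br (Hdiag i) (\<phi> D) = dsmult (of_int (Poly_Mapping.lookup \<alpha> i)) (\<phi> D)"
  shows "\<phi> D = N \<alpha> (\<lambda>k. Poly_Mapping.lookup (\<phi> D (xvar k)) (\<alpha> + Poly_Mapping.single k 1))"
  using weight[of "\<phi> D" \<alpha>] pin[OF assms(1)] assms(2) by (simp add: Wn_iff)

lemma phiN: "\<phi> (N \<alpha> a) = N \<alpha> (AA \<alpha> a)"
  unfolding AA_def
proof (rule weight_phi[OF Nin])
  fix i
  have "lie_br (Hdiag i) (\<phi> (N \<alpha> a)) = lie_br (\<phi> (Hdiag i)) (\<phi> (N \<alpha> a))" by (simp add: fixH)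
  also have "\<dots> = \<phi> (lie_br (Hdiag i) (N \<alpha> a))" by (simp add: pbr Hin Nin)
  also have "\<dots> = \<phi> (dsmult (of_int (Poly_Mapping.lookup \<alpha> i)) (N \<alpha> a))" by (simp add: br_H_N)
  also have "\<dots> = dsmult (of_int (Poly_Mapping.lookup \<alpha> i)) (\<phi> (N \<alpha> a))" by (simp add: psmul Nin)
  finally show "lie_br (Hdiag i) (\<phi> (N \<alpha> a)) = dsmult (of_int (Poly_Mapping.lookup \<alpha> i)) (\<phi> (N \<alpha> a))" .
qed

lemma AA_add: "AA g (\<lambda>k. a k + b k) = (\<lambda>k. AA g a k + AA g b k)"
proof (rule N_inj[of g])
  have "N g (AA g (\<lambda>k. a k + b k)) = \<phi> (dadd (N g a) (N g b))" by (simp add: phiN[symmetric] N_add)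
  also have "\<dots> = dadd (N g (AA g a)) (N g (AA g b))" by (simp add: padd Nin phiN)
  finally show "N g (AA g (\<lambda>k. a k + b k)) = N g (\<lambda>k. AA g a k + AA g b k)" by (simp add: N_add)
qed

lemma AA_smul: "AA g (\<lambda>k. t * a k) = (\<lambda>k. t * AA g a k)"
proof (rule N_inj[of g])
  have "N g (AA g (\<lambda>k. t * a k)) = \<phi> (dsmult t (N g a))" by (simp add: phiN[symmetric] N_smul)
  also have "\<dots> = dsmult t (N g (AA g a))" by (simp add: psmul Nin phiN)
  finally show "N g (AA g (\<lambda>k. t * a k)) = N g (\<lambda>k. t * AA g a k)" by (simp add: N_smul)
qed

lemma AA_inj: "AA g a = AA g b \<Longrightarrow> a = b"
  by (metis phiN pinj Nin N_inj)

lemma AA_surj: "\<exists>a. AA g a = b"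
proof -
  obtain D where D: "D \<in> Wn" "\<phi> D = N g b" using psurj[OF Nin] by blast
  have "lie_br (Hdiag i) D = dsmult (of_int (Poly_Mapping.lookup g i)) D" for i
  proof (rule pinj)
    show "lie_br (Hdiag i) D \<in> Wn" using D Hin by (simp add: Wn_iff is_der_lie_br)
    show "dsmult (of_int (Poly_Mapping.lookup g i)) D \<in> Wn" using D by (simp add: Wn_iff is_der_dsmult)
    have "\<phi> (lie_br (Hdiag i) D) = lie_br (Hdiag i) (N g b)" using D by (simp add: pbr Hin fixH)
    also have "\<dots> = \<phi> (dsmult (of_int (Poly_Mapping.lookup g i)) D)" using D by (simp add: br_H_N psmul)
    finally show "\<phi> (lie_br (Hdiag i) D) = \<phi> (dsmult (of_int (Poly_Mapping.lookup g i)) D)" .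
  qed
  then have "D = N g (\<lambda>k. Poly_Mapping.lookup (D (xvar k)) (g + Poly_Mapping.single k 1))"
    using weight[of D g] D(1) by (simp add: Wn_iff)
  then obtain a where "D = N g a" by blast
  then have "N g (AA g a) = N g b" using D phiN by simp
  then show ?thesis using N_inj by blast
qed

lemma AA_0: "AA 0 a = a"
proof -
  define u :: "'n \<Rightarrow> 'n \<Rightarrow> 'k" where "u j = (\<lambda>k. if k = j then 1 else 0)" for j
  have Au: "AA 0 (u j) = u j" for j
  proof (rule N_inj[of 0])
    show "N 0 (AA 0 (u j)) = N 0 (u j)"
      using phiN[of 0 "u j"] fixH[of j] by (simp add: Hdiag_N u_def)
  qed
  have z: "AA 0 (\<lambda>k. 0) = (\<lambda>k. 0)" using AA_smul[of 0 0 a] by simp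
  have "AA 0 (\<lambda>k. \<Sum>j\<in>I. a j * u j k) = (\<lambda>k. \<Sum>j\<in>I. a j * u j k)" if "finite I" for I
    using that
  proof (induction I rule: finite_induct)
    case empty then show ?case using z by simp
  next
    case (insert x F)
    have "AA 0 (\<lambda>k. \<Sum>j\<in>insert x F. a j * u j k) = AA 0 (\<lambda>k. a x * u x k + (\<Sum>j\<in>F. a j * u j k))"
      using insert by simp
    also have "\<dots> = (\<lambda>k. a x * AA 0 (u x) k + AA 0 (\<lambda>k. \<Sum>j\<in>F. a j * u j k) k)"
      by (simp only: AA_add AA_smul)
    also have "\<dots> = (\<lambda>k. \<Sum>j\<in>insert x F. a j * u j k)" using insert Au by simp
    finally show ?case .
  qed
  moreover have "(\<lambda>k. \<Sum>j\<in>UNIV. a j * u j k) = a"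
  proof -
    have "(\<lambda>k. \<Sum>j\<in>UNIV. a j * u j k) = (\<lambda>k. \<Sum>j\<in>UNIV. if k = j then a j else 0)"
      by (intro ext sum.cong) (auto simp: u_def)
    then show ?thesis by simp
  qed
  ultimately show ?thesis by (metis finite_UNIV)
qed

lemma AA_br: "AA (g + h) (\<lambda>k. dot a h * b k - dot b g * a k)
            = (\<lambda>k. dot (AA g a) h * AA h b k - dot (AA h b) g * AA g a k)"
proof (rule N_inj[of "g + h"])
  have "N (g + h) (AA (g + h) (\<lambda>k. dot a h * b k - dot b g * a k)) = \<phi> (lie_br (N g a) (N h b))"
    by (simp add: phiN br_N)
  also have "\<dots> = lie_br (N g (AA g a)) (N h (AA h b))" by (simp add: pbr Nin phiN)
  finally show "N (g + h) (AA (g + h) (\<lambda>k. dot a h * b k - dot b g * a k))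
     = N (g + h) (\<lambda>k. dot (AA g a) h * AA h b k - dot (AA h b) g * AA g a k)" by (simp add: br_N)
qed

lemma core_AA: "core AA"
  by (unfold_locales) (simp_all only: AA_add AA_smul AA_inj AA_surj AA_0 AA_br)


lemma Zin: "(\<lambda>f. 0) \<in> (Wn :: (('n, 'k) laurent \<Rightarrow> _) set)" by (simp add: Wn_iff is_der_zero)

lemma phi_zero: "\<phi> (\<lambda>f. 0) = (\<lambda>f. 0)"
proof -
  have "(\<lambda>f. 0) = dsmult 0 (\<lambda>f::('n, 'k) laurent. 0::('n, 'k) laurent)"
    by (rule ext) (simp add: dsmult_def lsmult_eq)
  then have "\<phi> (\<lambda>f. 0) = dsmult 0 (\<phi> (\<lambda>f. 0))" using psmul[OF Zin] by metis
  then show ?thesis by (simp add: dsmult_def lsmult_eq)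
qed

lemma phi_dsum: "finite S \<Longrightarrow> (\<And>i. i \<in> S \<Longrightarrow> F i \<in> Wn) \<Longrightarrow> \<phi> (dsum S F) = dsum S (\<lambda>i. \<phi> (F i))"
proof (induction S rule: finite_induct)
  case empty
  have "dsum {} F = (\<lambda>f. 0)" "dsum {} (\<lambda>i. \<phi> (F i)) = (\<lambda>f. 0)" by (simp_all add: dsum_def)
  then show ?case using phi_zero by simp
next
  case (insert x S)
  have "dsum S F \<in> Wn" using insert.prems by (simp add: Wn_iff is_der_dsum)
  then show ?case using insert by (simp add: dsum_insert padd)
qed

lemma phi_torus: "\<exists>l. (\<forall>i. l i \<noteq> 0) \<and> \<phi> = restrict (cj l) Wn"
proof -
  interpret core AA by (rule core_AA)
  obtain C where C: "\<And>g. C g \<noteq> 0" "\<And>g a. AA g a = (\<lambda>k. C g * a k)" using scalar by metis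
  define l where "l i = C (Poly_Mapping.single i 1)" for i
  have l0: "\<forall>i. l i \<noteq> 0" using C(1) by (simp add: l_def)
  have Cchi: "C g = chi l g" for g
    unfolding chi_UNIV l_def by (rule chi_form[OF C])
  have phN: "\<phi> (N \<alpha> a) = cj l (N \<alpha> a)" for \<alpha> a
  proof -
    have "\<phi> (N \<alpha> a) = N \<alpha> (\<lambda>k. C \<alpha> * a k)" by (simp only: phiN C(2))
    also have "\<dots> = cj l (N \<alpha> a)" unfolding Cchi by (rule cj_N[symmetric]) (use l0 in blast)
    finally show ?thesis .
  qed
  have main: "\<phi> D = cj l D" if D: "D \<in> Wn" for D
  proof -
    define S where "S = (SIGMA k:UNIV. Poly_Mapping.keys (D (xvar k)))"
    define F where "F = (\<lambda>(k, \<beta>). N (\<beta> - Poly_Mapping.single k 1) (\<lambda>j. if j = k then Poly_Mapping.lookup (D (xvar k)) \<beta> else 0))"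
    have De: "D = dsum S F" unfolding S_def F_def by (rule decomp) (use D in \<open>simp add: Wn_iff\<close>)
    have fin: "finite S" by (simp add: S_def)
    have Fin: "F i \<in> Wn" for i by (cases i) (simp add: F_def Nin)
    have Fcj: "\<phi> (F i) = cj l (F i)" for i by (cases i) (simp add: F_def phN)
    have "\<phi> D = dsum S (\<lambda>i. \<phi> (F i))" using De phi_dsum[OF fin Fin] by simp
    also have "\<dots> = dsum S (\<lambda>i. cj l (F i))" by (simp add: Fcj)
    also have "\<dots> = cj l D" using De by (simp add: cj_dsum)
    finally show ?thesis .
  qed
  have "\<phi> = restrict (cj l) Wn"
  proof (rule ext)
    fix D
    show "\<phi> D = restrict (cj l) Wn D"
    proof (cases "D \<in> Wn")
      case True then show ?thesis using main by simp
    next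
      case False then show ?thesis using extensional_arb[OF pext False] by simp
    qed
  qed
  then show ?thesis using l0 by blast
qed

end

theorem lemma2p12:
  "{\<phi> \<in> (lie_aut :: ((('n::finite, 'k::field_char_0) laurent \<Rightarrow> ('n, 'k) laurent) \<Rightarrow>
        (('n, 'k) laurent \<Rightarrow> ('n, 'k) laurent)) set). \<forall>i. \<phi> (Hdiag i) = Hdiag i}
   = torus_W"
proof
  show "torus_W \<subseteq> {\<phi> \<in> (lie_aut :: ((('n::finite, 'k::field_char_0) laurent \<Rightarrow> ('n, 'k) laurent) \<Rightarrow>
        (('n, 'k) laurent \<Rightarrow> ('n, 'k) laurent)) set). \<forall>i. \<phi> (Hdiag i) = Hdiag i}"
    by (rule torus_sub)
next
  show "{\<phi> \<in> (lie_aut :: ((('n::finite, 'k::field_char_0) laurent \<Rightarrow> ('n, 'k) laurent) \<Rightarrow>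
        (('n, 'k) laurent \<Rightarrow> ('n, 'k) laurent)) set). \<forall>i. \<phi> (Hdiag i) = Hdiag i} \<subseteq> torus_W"
  proof
    fix \<phi> :: "(('n, 'k) laurent \<Rightarrow> ('n, 'k) laurent) \<Rightarrow> (('n, 'k) laurent \<Rightarrow> ('n, 'k) laurent)"
    assume "\<phi> \<in> {\<phi> \<in> lie_aut. \<forall>i. \<phi> (Hdiag i) = Hdiag i}"
    then have phi: "\<phi> \<in> lie_aut" and fixH: "\<And>i. \<phi> (Hdiag i) = Hdiag i" by auto
    obtain l where l0: "\<forall>i. l i \<noteq> 0" and eq: "\<phi> = restrict (cj l) Wn"
      using phi_torus[OF phi fixH] by blast
    have "\<phi> = restrict (\<lambda>\<delta>. tor l \<circ> \<delta> \<circ> inv (tor l)) Wn"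
      using eq torus_fun_eq[of l] l0 by simp
    then show "\<phi> \<in> torus_W" unfolding torus_W_def using l0 by blast
  qed
qed


end
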